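(* Let $\mathbf{h}\in\mathbb{C}^{n}$ be a fixed vector and $\bar{\mathbf{A}}\in\mathbb{C}^{m\times n}$ a random matrix with i.i.d. elements of zero mean and unit variance. Let $\mathbf{v}\sim\mathcal{CN}(\mathbf{0}_{m},\mathbf{I}_{m})$ be independent of $\bar{\mathbf{A}}$, $\mathbf{y}=\bar{\mathbf{A}}\mathbf{h}+\mathbf{v}$, and $\hat{\mathbf{y}}=\mathrm{Q}(\mathbf{y})$, where $\mathrm{Q}$ is an $\infty$-bit quantizer with uniform quantization intervals of width $\Delta>0$, applied elementwise to real and imaginary parts. Let $\mathcal{CV}\subseteq\{1,\dots,m\}$, $\mathcal{CV}_{\mathrm{R}}=\mathcal{CV}\cup(\mathcal{CV}+m)$, and for $\hat{\mathbf{h}}\in\mathbb{C}^{n}$ let $$\ell_{\mathcal{CV}}(\hat{\mathbf{h}})=\sum_{i\in\mathcal{CV}_{\mathrm{R}}}\log\left(\Phi\left(\frac{\hat{y}_{\mathrm{R},i}^{\mathrm{up}}-\bar{\mathbf{a}}_{\mathrm{R},i}^{\mathrm{T}}\hat{\mathbf{h}}_{\mathrm{R}}}{\sqrt{1/2}}\right)-\Phi\left(\frac{\hat{y}_{\mathrm{R},i}^{\mathrm{lo}}-\bar{\mathbf{a}}_{\mathrm{R},i}^{\mathrm{T}}\hat{\mathbf{h}}_{\mathrm{R}}}{\sqrt{1/2}}\right)\right),$$ and let $f_{\mathcal{CV}}(\hat{\mathbf{h}})$ be the limit in probability of $\frac{1}{2|\mathcal{CV}|}\ell_{\mathcal{CV}}(\hat{\mathbf{h}})$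 as $|\mathcal{CV}|\to\infty$. Then $$f_{\mathcal{CV}}(\hat{\mathbf{h}})=-\|\hat{\mathbf{h}}-\mathbf{h}\|^{2}-\frac{1}{2}\log \pi e+\log\Delta+\mathcal{O}(\Delta)$$ as $\Delta\to 0$.
   Context: $\Phi$ is the CDF of $\mathcal{N}(0,1)$; logarithms are natural. Real forms: for a complex vector $\mathbf{x}$, $\mathbf{x}_{\mathrm{R}}=[\mathrm{Re}(\mathbf{x})^{\mathrm{T}},\mathrm{Im}(\mathbf{x})^{\mathrm{T}}]^{\mathrm{T}}$; for a complex matrix $\mathbf{X}$, $\mathbf{X}_{\mathrm{R}}=\begin{bmatrix}\mathrm{Re}(\mathbf{X})&-\mathrm{Im}(\mathbf{X})\\\mathrm{Im}(\mathbf{X})&\mathrm{Re}(\mathbf{X})\end{bmatrix}$; $\bar{\mathbf{a}}_{\mathrm{R},i}$ is the transpose of the $i$-th row of $\bar{\mathbf{A}}_{\mathrm{R}}$. The $\infty$-bit uniform quantizer partitions $\mathbb{R}$ into intervals $[j\Delta,(j+1)\Delta)$, $j\in\mathbb{Z}$ (up to an offset), each mapped to a fixed quantization point; for each real entry, $\hat{y}_{\mathrm{R},i}^{\mathrm{lo}}$ and $\hat{y}_{\mathrm{R},i}^{\mathrm{up}}$ are the lower and upper endpoints of the interval containing $y_{\mathrm{R},i}$. Each real/imaginary noise component has variance $1/2$. *)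

theory Defs
  imports "HOL-Probability.Probability" "HOL-Library.Landau_Symbols"
begin

definition Phi :: "real \<Rightarrow> real" where
  "Phi x = measure (density lborel std_normal_density) {..x}"

text \<open>Infinite-bit uniform quantizer with step Delta and offset c: the cell containing x
  is [c + j Delta, c + (j+1) Delta). qlo / qup are its lower / upper endpoints.\<close>
definition qlo :: "real \<Rightarrow> real \<Rightarrow> real \<Rightarrow> real" where
  "qlo Delta c x = c + Delta * of_int \<lfloor>(x - c) / Delta\<rfloor>"

definition qup :: "real \<Rightarrow> real \<Rightarrow> real \<Rightarrow> real" where
  "qup Delta c x = qlo Delta c x + Delta"

text \<open>One summand of the log-likelihood: x is the real entry y_{R,i}, t = abar_{R,i}^T hhat_R.\<close>
definition llterm :: "real \<Rightarrow> real \<Rightarrow> real \<Rightarrow> real \<Rightarrow> real" where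
  "llterm Delta c x t =
     ln (Phi ((qup Delta c x - t) / sqrt (1/2)) - Phi ((qlo Delta c x - t) / sqrt (1/2)))"

definition rowmul :: "(nat \<Rightarrow> 'n::finite \<Rightarrow> complex) \<Rightarrow> nat \<Rightarrow> complex ^ 'n \<Rightarrow> complex" where
  "rowmul A i x = (\<Sum>j\<in>UNIV. A i j * x $ j)"

text \<open>The real-form index set CV_R = CV \<union> (CV + m):
  index i \<in> CV refers to the real part of row i, index i+m to its imaginary part;
  abar_{R,i}^T hhat_R = Re((A hhat)_i) and abar_{R,i+m}^T hhat_R = Im((A hhat)_i).\<close>
definition ell :: "real \<Rightarrow> real \<Rightarrow> (nat \<Rightarrow> 'n::finite \<Rightarrow> complex) \<Rightarrow> (nat \<Rightarrow> complex)
                   \<Rightarrow> complex ^ 'n \<Rightarrow> complex ^ 'n \<Rightarrow> nat set \<Rightarrow> real" where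
  "ell Delta c A v h hh CV =
     (\<Sum>i\<in>CV. llterm Delta c (Re (rowmul A i h + v i)) (Re (rowmul A i hh))
             + llterm Delta c (Im (rowmul A i h + v i)) (Im (rowmul A i hh)))"

definition conv_in_prob :: "'a measure \<Rightarrow> (nat \<Rightarrow> 'a \<Rightarrow> real) \<Rightarrow> real \<Rightarrow> bool" where
  "conv_in_prob M X L \<longleftrightarrow> (\<forall>k. X k \<in> borel_measurable M) \<and>
     (\<forall>e>0. (\<lambda>k. measure M {\<omega>\<in>space M. \<bar>X k \<omega> - L\<bar> > e}) \<longlonglongrightarrow> 0)"

end

theory Submission
  imports Defs
begin

lemma measure_std_normal:
  assumes [measurable]: "A \<in> sets borel"
  shows "measure (density lborel std_normal_density) A = (LINT x:A|lborel. std_normal_density x)"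
proof -
  have int: "integrable lborel (\<lambda>x. indicator A x * std_normal_density x)"
    using integrable_mult_indicator[of A lborel std_normal_density] by simp
  have "emeasure (density lborel std_normal_density) A = (\<integral>\<^sup>+ x. ennreal (std_normal_density x) * indicator A x \<partial>lborel)"
    by (subst emeasure_density) auto
  also have "\<dots> = (\<integral>\<^sup>+ x. ennreal (indicator A x * std_normal_density x) \<partial>lborel)"
    by (intro nn_integral_cong) (auto split: split_indicator)
  also have "\<dots> = ennreal (LINT x:A|lborel. std_normal_density x)"
    unfolding set_lebesgue_integral_def
    by (subst nn_integral_eq_integral[OF int]) auto
  finally show ?thesis
    unfolding measure_def
    by (simp add: set_lebesgue_integral_def integral_nonneg_AE)
qed

lemma Phi_diff:
  assumes "a \<le> b"
  shows "Phi b - Phi a = (LINT x:{a<..b}|lborel. std_normal_density x)"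
proof -
  interpret P: prob_space "density lborel std_normal_density"
    using prob_space_normal_density by simp
  have "Phi b - Phi a = measure (density lborel std_normal_density) ({..b} - {..a})"
    unfolding Phi_def using assms by (subst P.finite_measure_Diff) auto
  also have "{..b} - {..a} = {a<..b}" by auto
  finally show ?thesis using measure_std_normal by simp
qed

lemma Phi_bounds:
  assumes "a < b" "\<And>x. x \<in> {a<..b} \<Longrightarrow> lo \<le> std_normal_density x"
     "\<And>x. x \<in> {a<..b} \<Longrightarrow> std_normal_density x \<le> hi"
  shows "(b - a) * lo \<le> Phi b - Phi a" "Phi b - Phi a \<le> (b - a) * hi"
proof -
  have si: "set_integrable lborel {a<..b} std_normal_density"
    unfolding set_integrable_def by (rule integrable_mult_indicator) auto
  have sc: "set_integrable lborel {a<..b} (\<lambda>_. c)" for c :: real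
    unfolding set_integrable_def using assms by (intro integrable_indicator) (auto simp: emeasure_lborel_Ioc)
  have m: "measure lborel {a<..b} = b - a" using assms by simp
  have fin: "emeasure lborel {a<..b} \<noteq> \<infinity>" using assms by (simp add: emeasure_lborel_Ioc)
  have "(LINT x:{a<..b}|lborel. lo) \<le> (LINT x:{a<..b}|lborel. std_normal_density x)"
    by (rule set_integral_mono[OF sc si]) (rule assms(2))
  then show "(b - a) * lo \<le> Phi b - Phi a"
    unfolding Phi_diff[OF less_imp_le[OF assms(1)]]
    using set_integral_const[of "{a<..b}" lborel lo] m fin by simp
  have "(LINT x:{a<..b}|lborel. std_normal_density x) \<le> (LINT x:{a<..b}|lborel. hi)"
    by (rule set_integral_mono[OF si sc]) (rule assms(3))
  then show "Phi b - Phi a \<le> (b - a) * hi"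
    unfolding Phi_diff[OF less_imp_le[OF assms(1)]]
    using set_integral_const[of "{a<..b}" lborel hi] m fin by simp
qed

lemma sq_diff_bound:
  fixes u u0 u1 u2 :: real
  assumes "u1 \<le> u" "u \<le> u2" "u1 \<le> u0" "u0 \<le> u2"
  shows "\<bar>u\<^sup>2 - u0\<^sup>2\<bar> \<le> (u2 - u1) * (2 * \<bar>u0\<bar> + (u2 - u1))"
proof -
  have e: "u\<^sup>2 - u0\<^sup>2 = (u - u0) * (u + u0)" by (simp add: power2_eq_square algebra_simps)
  have a: "\<bar>u - u0\<bar> \<le> u2 - u1" using assms by auto
  have b: "\<bar>u + u0\<bar> \<le> 2 * \<bar>u0\<bar> + (u2 - u1)" using assms by auto
  have "\<bar>u\<^sup>2 - u0\<^sup>2\<bar> = \<bar>u - u0\<bar> * \<bar>u + u0\<bar>" by (simp add: e abs_mult)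
  also have "\<dots> \<le> (u2 - u1) * (2 * \<bar>u0\<bar> + (u2 - u1))"
    by (rule mult_mono[OF a b]) (use assms in auto)
  finally show ?thesis .
qed

lemma snd_ratio: "std_normal_density u = std_normal_density u0 * exp ((u0\<^sup>2 - u\<^sup>2) / 2)"
proof -
  have "- (u\<^sup>2 / 2) = - (u0\<^sup>2 / 2) + (u0\<^sup>2 - u\<^sup>2) / 2" by (simp add: field_simps)
  then have "exp (- (u\<^sup>2 / 2)) = exp (- (u0\<^sup>2 / 2)) * exp ((u0\<^sup>2 - u\<^sup>2) / 2)"
    by (simp add: exp_add[symmetric])
  then show ?thesis by (simp add: std_normal_density_def)
qed

lemma lnPhi_bound:
  fixes u0 u1 u2 :: real
  assumes "u1 < u2" "u1 \<le> u0" "u0 \<le> u2"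
  shows "\<bar>ln (Phi u2 - Phi u1) - ln ((u2 - u1) * std_normal_density u0)\<bar>
          \<le> (u2 - u1) * (2 * \<bar>u0\<bar> + (u2 - u1)) / 2"
proof -
  define b where "b = (u2 - u1) * (2 * \<bar>u0\<bar> + (u2 - u1))"
  define p where "p = std_normal_density u0"
  have p: "p > 0" unfolding p_def by (rule normal_density_pos) simp
  have lo: "p * exp (- b / 2) \<le> std_normal_density u" and hi: "std_normal_density u \<le> p * exp (b / 2)"
    if "u \<in> {u1<..u2}" for u
  proof -
    have bb: "\<bar>u\<^sup>2 - u0\<^sup>2\<bar> \<le> b" unfolding b_def using that assms by (intro sq_diff_bound) auto
    show "p * exp (- b / 2) \<le> std_normal_density u"
      unfolding snd_ratio[of u u0] p_def[symmetric] using bb p by (intro mult_left_mono) auto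
    show "std_normal_density u \<le> p * exp (b / 2)"
      unfolding snd_ratio[of u u0] p_def[symmetric] using bb p by (intro mult_left_mono) auto
  qed
  note PB = Phi_bounds[OF assms(1) lo hi]
  have L: "(u2 - u1) * (p * exp (- b / 2)) \<le> Phi u2 - Phi u1" by (rule PB(1))
  have H: "Phi u2 - Phi u1 \<le> (u2 - u1) * (p * exp (b / 2))" by (rule PB(2))
  have w: "u2 - u1 > 0" using assms by simp
  have pos: "(u2 - u1) * (p * exp (- b / 2)) > 0" using w p by simp
  have "ln ((u2 - u1) * (p * exp (- b / 2))) \<le> ln (Phi u2 - Phi u1)"
    using L pos by (subst ln_le_cancel_iff) auto
  moreover have "ln (Phi u2 - Phi u1) \<le> ln ((u2 - u1) * (p * exp (b / 2)))"
    using H pos L by (subst ln_le_cancel_iff) auto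
  moreover have "ln ((u2 - u1) * (p * exp (- b / 2))) = ln ((u2 - u1) * p) - b / 2"
    using w p by (simp add: ln_mult)
  moreover have "ln ((u2 - u1) * (p * exp (b / 2))) = ln ((u2 - u1) * p) + b / 2"
    using w p by (simp add: ln_mult)
  ultimately show ?thesis unfolding b_def[symmetric] p_def[symmetric] by (simp only: abs_le_iff) linarith
qed

lemma qlo_le: "D > 0 \<Longrightarrow> qlo D c x \<le> x"
proof -
  assume D: "D > 0"
  have "of_int \<lfloor>(x - c) / D\<rfloor> \<le> (x - c) / D" by (rule of_int_floor_le)
  then have "of_int \<lfloor>(x - c) / D\<rfloor> * D \<le> x - c" by (metis D pos_le_divide_eq)
  then have "D * of_int \<lfloor>(x - c) / D\<rfloor> \<le> x - c" by (simp add: mult.commute)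
  then show ?thesis unfolding qlo_def by linarith
qed

lemma qlo_gt: "D > 0 \<Longrightarrow> x < qlo D c x + D"
proof -
  assume D: "D > 0"
  have "(x - c) / D < of_int \<lfloor>(x - c) / D\<rfloor> + 1" by (rule real_of_int_floor_add_one_gt)
  then have "x - c < D * of_int \<lfloor>(x - c) / D\<rfloor> + D" using D by (simp add: field_simps)
  then show ?thesis unfolding qlo_def by linarith
qed

lemma llterm_bound:
  assumes D: "D > 0"
  shows "\<bar>llterm D c x t - (ln D - ln pi / 2 - (x - t)\<^sup>2)\<bar> \<le> D * (2 * \<bar>x - t\<bar> + D)"
proof -
  define s where "s = sqrt (1/2::real)"
  define lo where "lo = qlo D c x"
  have s: "s > 0" unfolding s_def by simp
  have s2: "1 / s = sqrt 2" unfolding s_def by (simp add: real_sqrt_divide)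
  have l1: "lo \<le> x" unfolding lo_def using qlo_le[OF D] .
  have l2: "x < lo + D" unfolding lo_def using qlo_gt[OF D] .
  define u1 where "u1 = (lo - t) / s"
  define u2 where "u2 = (lo + D - t) / s"
  define u0 where "u0 = (x - t) / s"
  have a1: "u1 < u2" unfolding u1_def u2_def using s D by (simp add: divide_strict_right_mono)
  have a2: "u1 \<le> u0" unfolding u1_def u0_def using s l1 by (simp add: divide_right_mono)
  have a3: "u0 \<le> u2" unfolding u2_def u0_def using s l2 by (simp add: divide_right_mono)
  have lt: "llterm D c x t = ln (Phi u2 - Phi u1)"
    unfolding llterm_def u1_def u2_def qup_def lo_def s_def by simp
  have "u2 - u1 = D * (1 / s)" unfolding u1_def u2_def by (simp add: diff_divide_distrib[symmetric])
  then have w: "u2 - u1 = D * sqrt 2" using s2 by simp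
  have "u0 = (x - t) * (1 / s)" unfolding u0_def by simp
  then have u0': "u0 = (x - t) * sqrt 2" using s2 by simp
  have u0sq: "u0\<^sup>2 = 2 * (x - t)\<^sup>2" unfolding u0' by (simp add: power_mult_distrib)
  have "ln ((u2 - u1) * std_normal_density u0) = ln D - ln pi / 2 - (x - t)\<^sup>2"
  proof -
    have "(u2 - u1) * std_normal_density u0 = D * (sqrt 2 / sqrt (2 * pi)) * exp (- (x - t)\<^sup>2)"
      unfolding w std_normal_density_def u0sq by simp
    also have "sqrt 2 / sqrt (2 * pi) = 1 / sqrt pi"
      by (simp add: real_sqrt_mult)
    finally have e: "(u2 - u1) * std_normal_density u0 = D * (1 / sqrt pi) * exp (- (x - t)\<^sup>2)" .
    show ?thesis unfolding e using D by (simp add: ln_mult ln_div ln_sqrt)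
  qed
  moreover have "(u2 - u1) * (2 * \<bar>u0\<bar> + (u2 - u1)) / 2 = D * (2 * \<bar>x - t\<bar> + D)"
  proof -
    have au: "\<bar>u0\<bar> = \<bar>x - t\<bar> * sqrt 2" unfolding u0' by (simp add: abs_mult)
    have q: "sqrt 2 * sqrt 2 = (2::real)" by simp
    have "(u2 - u1) * (2 * \<bar>u0\<bar> + (u2 - u1)) / 2 = D * (sqrt 2 * sqrt 2) * (2 * \<bar>x - t\<bar> + D) / 2"
      unfolding w au by (simp add: algebra_simps)
    then show ?thesis unfolding q by simp
  qed
  ultimately show ?thesis using lnPhi_bound[OF a1 a2 a3] lt by simp
qed

lemma (in prob_space) indep_vars_pair:
  assumes "indep_vars (\<lambda>_. borel) X I" "a \<in> I" "b \<in> I" "a \<noteq> b"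
  shows "indep_var borel (X a) borel (X b)"
proof -
  let ?F = "\<lambda>i. sigma_sets (space M) {X i -` A \<inter> space M |A. A \<in> sets borel}"
  from assms(1) have rv: "\<forall>i\<in>I. random_variable borel (X i)" and ind: "indep_sets ?F I"
    unfolding indep_vars_def by auto
  have ev: "?F i \<subseteq> events" if "i \<in> I" for i using ind that unfolding indep_sets_def by auto
  show ?thesis unfolding indep_var_eq indep_sets2_eq
  proof (intro conjI ballI)
    show "random_variable borel (X a)" "random_variable borel (X b)" using rv assms by auto
    show "?F a \<subseteq> events" "?F b \<subseteq> events" using ev assms by auto
    fix x y assume xy: "x \<in> ?F a" "y \<in> ?F b"
    define A where "A = (\<lambda>j. if j = a then x else y)"
    have "prob (\<Inter>j\<in>{a,b}. A j) = (\<Prod>j\<in>{a,b}. prob (A j))"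
      using ind assms xy unfolding indep_sets_def A_def
      by (intro ind[unfolded indep_sets_def, THEN conjunct2, rule_format]) (auto simp: Pi_iff)
    then show "prob (x \<inter> y) = prob x * prob y" using assms(4) by (simp add: A_def Int_commute)
  qed
qed

lemma (in prob_space) complex_integrable_from_parts:
  fixes f :: "'a \<Rightarrow> complex"
  assumes [measurable]: "f \<in> borel_measurable M"
    and "integrable M (\<lambda>\<omega>. Re (f \<omega>))" "integrable M (\<lambda>\<omega>. Im (f \<omega>))"
  shows "integrable M f"
proof -
  have "integrable M (\<lambda>\<omega>. \<bar>Re (f \<omega>)\<bar> + \<bar>Im (f \<omega>)\<bar>)" using assms by auto
  then show ?thesis
    by (rule Bochner_Integration.integrable_bound) (auto intro: cmod_le)
qed

lemma (in prob_space) complex_expectation_zero: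
  fixes f :: "'a \<Rightarrow> complex"
  assumes "integrable M f" "expectation (\<lambda>\<omega>. Re (f \<omega>)) = 0" "expectation (\<lambda>\<omega>. Im (f \<omega>)) = 0"
  shows "expectation f = 0"
  using assms by (simp add: complex_eq_iff)

lemma (in prob_space) EW_row:
  fixes a :: "'n::finite \<Rightarrow> 'a \<Rightarrow> complex" and v :: "'a \<Rightarrow> complex" and d :: "complex ^ 'n"
  assumes ma[measurable]: "\<And>j. a j \<in> borel_measurable M" and mv[measurable]: "v \<in> borel_measurable M"
    and ia: "\<And>j k. j \<noteq> k \<Longrightarrow> indep_var borel (a j) borel (a k)"
    and iv: "\<And>j. indep_var borel (a j) borel v"
    and inta: "\<And>j. integrable M (a j)" and intv: "integrable M v"
    and ea: "\<And>j. expectation (a j) = 0" and ev: "expectation v = 0"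
    and sqa: "\<And>j. integrable M (\<lambda>\<omega>. (cmod (a j \<omega>))\<^sup>2)" and sqv: "integrable M (\<lambda>\<omega>. (cmod (v \<omega>))\<^sup>2)"
    and ea2: "\<And>j. expectation (\<lambda>\<omega>. (cmod (a j \<omega>))\<^sup>2) = 2"
    and ev2: "expectation (\<lambda>\<omega>. (cmod (v \<omega>))\<^sup>2) = 1"
  shows "integrable M (\<lambda>\<omega>. (cmod ((\<Sum>j\<in>UNIV. a j \<omega> * d $ j) + v \<omega>))\<^sup>2)"
    and "expectation (\<lambda>\<omega>. (cmod ((\<Sum>j\<in>UNIV. a j \<omega> * d $ j) + v \<omega>))\<^sup>2) = 2 * (norm d)\<^sup>2 + 1"
proof -
  define z where "z \<omega> = (\<Sum>j\<in>UNIV. a j \<omega> * d $ j) + v \<omega>" for \<omega>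
  define T1 where "T1 j k \<omega> = a j \<omega> * cnj (a k \<omega>) * (d $ j * cnj (d $ k))" for j k \<omega>
  define T2 where "T2 j \<omega> = a j \<omega> * cnj (v \<omega>) * d $ j" for j \<omega>
  define T3 where "T3 j \<omega> = cnj (a j \<omega> * cnj (v \<omega>) * d $ j)" for j \<omega>
  define T4 where "T4 \<omega> = v \<omega> * cnj (v \<omega>)" for \<omega>
  have zz: "z \<omega> * cnj (z \<omega>) = (\<Sum>j\<in>UNIV. \<Sum>k\<in>UNIV. T1 j k \<omega>) + (\<Sum>j\<in>UNIV. T2 j \<omega>) + (\<Sum>j\<in>UNIV. T3 j \<omega>) + T4 \<omega>" for \<omega>
    unfolding z_def T1_def T2_def T3_def T4_def
    apply (simp add: algebra_simps sum_distrib_left sum_distrib_right sum_product sum.distrib)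
    by (rule sum.swap)
  have cm: "cnj \<in> borel_measurable borel"
    by (rule borel_measurable_continuous_onI) (intro continuous_intros)
  have iac: "indep_var borel (a j) borel (cnj \<circ> a k)" if "j \<noteq> k" for j k
    using indep_var_compose[OF ia[OF that], of id borel cnj borel] cm by simp
  have ivc: "indep_var borel (a j) borel (cnj \<circ> v)" for j
    using indep_var_compose[OF iv[of j], of id borel cnj borel] cm by simp
  have i1: "integrable M (T1 j k)" "expectation (T1 j k) = (if j = k then complex_of_real (2 * (cmod (d $ j))\<^sup>2) else 0)" for j k
  proof -
    have "integrable M (\<lambda>\<omega>. a j \<omega> * cnj (a k \<omega>)) \<and> expectation (\<lambda>\<omega>. a j \<omega> * cnj (a k \<omega>)) = (if j = k then 2 else 0)"
    proof (cases "j = k")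
      case True
      have e: "a j \<omega> * cnj (a j \<omega>) = complex_of_real ((cmod (a j \<omega>))\<^sup>2)" for \<omega>
        by (rule complex_norm_square[symmetric])
      have eq: "(\<lambda>\<omega>. a j \<omega> * cnj (a k \<omega>)) = (\<lambda>\<omega>. complex_of_real ((cmod (a j \<omega>))\<^sup>2))"
        using True e by simp
      show ?thesis unfolding eq using True sqa[of j] ea2[of j] by (simp del: of_real_power)
    next
      case False
      have ic: "integrable M (cnj \<circ> a k)" using inta[of k] by (simp add: comp_def)
      show ?thesis using indep_var_lebesgue_integral[OF iac[OF False] inta[of j] ic]
          indep_var_integrable[OF iac[OF False] inta[of j] ic] False ea[of j]
        by (simp add: comp_def)
    qed
    then show "integrable M (T1 j k)" "expectation (T1 j k) = (if j = k then complex_of_real (2 * (cmod (d $ j))\<^sup>2) else 0)"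
      unfolding T1_def by (auto simp: complex_norm_square[symmetric])
  qed
  have i2: "integrable M (T2 j)" "expectation (T2 j) = 0" for j
  proof -
    have ic: "integrable M (cnj \<circ> v)" using intv by (simp add: comp_def)
    have "integrable M (\<lambda>\<omega>. a j \<omega> * cnj (v \<omega>)) \<and> expectation (\<lambda>\<omega>. a j \<omega> * cnj (v \<omega>)) = 0"
      using indep_var_lebesgue_integral[OF ivc inta[of j] ic]
          indep_var_integrable[OF ivc inta[of j] ic] ea[of j]
      by (simp add: comp_def)
    then show "integrable M (T2 j)" "expectation (T2 j) = 0" unfolding T2_def by auto
  qed
  have i3: "integrable M (T3 j)" "expectation (T3 j) = 0" for j
  proof -
    have e: "T3 j = (\<lambda>\<omega>. cnj (T2 j \<omega>))" by (simp add: T3_def T2_def fun_eq_iff)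
    show "integrable M (T3 j)" unfolding e by (rule integrable_cnj[OF i2(1)])
    show "expectation (T3 j) = 0" unfolding e integral_cnj using i2(2)[of j] by simp
  qed
  have i4: "integrable M T4" "expectation T4 = 1"
  proof -
    have e: "T4 \<omega> = complex_of_real ((cmod (v \<omega>))\<^sup>2)" for \<omega>
      unfolding T4_def by (rule complex_norm_square[symmetric])
    show "integrable M T4" "expectation T4 = 1" unfolding e using sqv ev2 by (simp_all del: of_real_power)
  qed
  have intP: "integrable M (\<lambda>\<omega>. z \<omega> * cnj (z \<omega>))"
    unfolding zz using i1 i2 i3 i4 by auto
  have EP: "expectation (\<lambda>\<omega>. z \<omega> * cnj (z \<omega>)) = (\<Sum>j\<in>UNIV. complex_of_real (2 * (cmod (d $ j))\<^sup>2)) + 1"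
  proof -
    have "expectation (\<lambda>\<omega>. z \<omega> * cnj (z \<omega>)) = (\<Sum>j\<in>UNIV. \<Sum>k\<in>UNIV. expectation (T1 j k)) + (\<Sum>j\<in>UNIV. expectation (T2 j)) + (\<Sum>j\<in>UNIV. expectation (T3 j)) + expectation T4"
    proof -
      have a1: "integrable M (\<lambda>\<omega>. \<Sum>j\<in>UNIV. \<Sum>k\<in>UNIV. T1 j k \<omega>)" by (intro Bochner_Integration.integrable_sum i1(1))
      have a2: "integrable M (\<lambda>\<omega>. \<Sum>j\<in>UNIV. T2 j \<omega>)" by (intro Bochner_Integration.integrable_sum i2(1))
      have a3: "integrable M (\<lambda>\<omega>. \<Sum>j\<in>UNIV. T3 j \<omega>)" by (intro Bochner_Integration.integrable_sum i3(1))
      have "expectation (\<lambda>\<omega>. z \<omega> * cnj (z \<omega>)) = expectation (\<lambda>\<omega>. \<Sum>j\<in>UNIV. \<Sum>k\<in>UNIV. T1 j k \<omega>)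
         + expectation (\<lambda>\<omega>. \<Sum>j\<in>UNIV. T2 j \<omega>) + expectation (\<lambda>\<omega>. \<Sum>j\<in>UNIV. T3 j \<omega>) + expectation T4"
        unfolding zz
        apply (subst Bochner_Integration.integral_add)
          apply (intro Bochner_Integration.integrable_add a1 a2 a3 i4)+
        apply (subst Bochner_Integration.integral_add, intro Bochner_Integration.integrable_add a1 a2 a3, intro a3)
        apply (subst Bochner_Integration.integral_add, intro a1, intro a2)
        by simp
      also have "\<dots> = (\<Sum>j\<in>UNIV. \<Sum>k\<in>UNIV. expectation (T1 j k)) + (\<Sum>j\<in>UNIV. expectation (T2 j)) + (\<Sum>j\<in>UNIV. expectation (T3 j)) + expectation T4"
        using i1 i2 i3 by (simp add: integral_sum integrable_sum)
      finally show ?thesis .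
    qed
    also have "\<dots> = (\<Sum>j\<in>UNIV. complex_of_real (2 * (cmod (d $ j))\<^sup>2)) + 1"
      using i2 i3 i4 by (simp only: i1(2) sum.delta sum.neutral) simp
    finally show ?thesis .
  qed
  have nd: "(norm d)\<^sup>2 = (\<Sum>j\<in>UNIV. (cmod (d $ j))\<^sup>2)"
    unfolding norm_vec_def L2_set_def by (simp add: sum_nonneg)
  have W: "(cmod (z \<omega>))\<^sup>2 = Re (z \<omega> * cnj (z \<omega>))" for \<omega>
    by (simp add: complex_norm_square[symmetric])
  have eqW: "(\<lambda>\<omega>. (cmod (z \<omega>))\<^sup>2) = (\<lambda>\<omega>. Re (z \<omega> * cnj (z \<omega>)))"
    by (intro ext W)
  have "integrable M (\<lambda>\<omega>. (cmod (z \<omega>))\<^sup>2)"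
    unfolding eqW by (rule integrable_Re[OF intP])
  then show "integrable M (\<lambda>\<omega>. (cmod ((\<Sum>j\<in>UNIV. a j \<omega> * d $ j) + v \<omega>))\<^sup>2)"
    unfolding z_def .
  have "expectation (\<lambda>\<omega>. (cmod (z \<omega>))\<^sup>2) = Re (expectation (\<lambda>\<omega>. z \<omega> * cnj (z \<omega>)))"
    unfolding eqW by (rule integral_Re[OF intP])
  also have "\<dots> = 2 * (norm d)\<^sup>2 + 1" unfolding EP nd by (simp add: sum_distrib_left)
  finally show "expectation (\<lambda>\<omega>. (cmod ((\<Sum>j\<in>UNIV. a j \<omega> * d $ j) + v \<omega>))\<^sup>2) = 2 * (norm d)\<^sup>2 + 1"
    unfolding z_def .
qed

lemma (in prob_space) conv_contra:
  assumes lim: "(\<lambda>k. prob {\<omega>\<in>space M. e < \<bar>Y k \<omega> - F\<bar>}) \<longlonglongrightarrow> 0"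
    and q: "q > 0" and lb: "\<And>k. k \<ge> 1 \<Longrightarrow> q \<le> prob {\<omega>\<in>space M. e < \<bar>Y k \<omega> - F\<bar>}"
  shows False
proof -
  have "eventually (\<lambda>k. prob {\<omega>\<in>space M. e < \<bar>Y k \<omega> - F\<bar>} < q) sequentially"
    using order_tendstoD(2)[OF lim q] .
  moreover have "eventually (\<lambda>k. k \<ge> (1::nat)) sequentially" by (rule eventually_ge_at_top)
  ultimately have "eventually (\<lambda>k. False) sequentially"
    by eventually_elim (use lb in force)
  then show False by simp
qed

lemma (in prob_space) lower_f:
  fixes Y Wk :: "nat \<Rightarrow> 'a \<Rightarrow> real"
  assumes conv: "\<And>e. e > 0 \<Longrightarrow> (\<lambda>k. prob {\<omega>\<in>space M. e < \<bar>Y k \<omega> - F\<bar>}) \<longlonglongrightarrow> 0"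
    and mY[measurable]: "\<And>k. Y k \<in> borel_measurable M"
    and mW[measurable]: "\<And>k. Wk k \<in> borel_measurable M"
    and iW: "\<And>k. k \<ge> 1 \<Longrightarrow> integrable M (Wk k)"
    and eW: "\<And>k. k \<ge> 1 \<Longrightarrow> expectation (Wk k) = m"
    and nn: "\<And>k \<omega>. 0 \<le> Wk k \<omega>"
    and bd: "\<And>k \<omega>. k \<ge> 1 \<Longrightarrow> \<omega> \<in> space M \<Longrightarrow> \<alpha> - \<beta> * Wk k \<omega> \<le> Y k \<omega>"
    and \<beta>: "\<beta> > 0"
  shows "\<alpha> - \<beta> * m \<le> F"
proof (rule ccontr)
  assume neg: "\<not> \<alpha> - \<beta> * m \<le> F"
  define g where "g = \<alpha> - \<beta> * m - F"
  have g: "g > 0" using neg unfolding g_def by simp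
  define \<delta> where "\<delta> = g / (2 * \<beta>)"
  have \<delta>: "\<delta> > 0" unfolding \<delta>_def using g \<beta> by simp
  have m: "m \<ge> 0" using eW[of 1] nn by (metis integral_nonneg_AE AE_I2 order_refl)
  define q where "q = \<delta> / (m + \<delta>)"
  have q: "q > 0" unfolding q_def using \<delta> m by simp
  show False
  proof (rule conv_contra[OF conv[of "g/4"] q])
    show "0 < g / 4" using g by simp
    fix k :: nat assume k: "k \<ge> 1"
    have mk: "prob {\<omega>\<in>space M. m + \<delta> \<le> Wk k \<omega>} \<le> expectation (Wk k) / (m + \<delta>)"
      by (rule integral_Markov_inequality_measure[OF iW[OF k], of "space M"]) (use nn \<delta> m in auto)
    have c: "prob {\<omega>\<in>space M. Wk k \<omega> < m + \<delta>} = 1 - prob {\<omega>\<in>space M. m + \<delta> \<le> Wk k \<omega>}"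
    proof -
      have "{\<omega>\<in>space M. Wk k \<omega> < m + \<delta>} = space M - {\<omega>\<in>space M. m + \<delta> \<le> Wk k \<omega>}" by auto
      then show ?thesis by (simp add: prob_compl)
    qed
    have "q \<le> prob {\<omega>\<in>space M. Wk k \<omega> < m + \<delta>}"
      unfolding c using mk eW[OF k] m \<delta> unfolding q_def by (simp add: field_simps)
    also have "\<dots> \<le> prob {\<omega>\<in>space M. g / 4 < \<bar>Y k \<omega> - F\<bar>}"
    proof (rule finite_measure_mono)
      show "{\<omega> \<in> space M. g / 4 < \<bar>Y k \<omega> - F\<bar>} \<in> sets M" by measurable
      show "{\<omega> \<in> space M. Wk k \<omega> < m + \<delta>} \<subseteq> {\<omega> \<in> space M. g / 4 < \<bar>Y k \<omega> - F\<bar>}"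
      proof safe
        fix \<omega> assume \<omega>: "\<omega> \<in> space M" "Wk k \<omega> < m + \<delta>"
        have "\<beta> * Wk k \<omega> < \<beta> * (m + \<delta>)" using \<omega> \<beta> by simp
        also have "\<beta> * (m + \<delta>) = \<beta> * m + g / 2" unfolding \<delta>_def using \<beta> by (simp add: field_simps)
        finally have "\<beta> * Wk k \<omega> < \<beta> * m + g / 2" .
        then have "F + g / 2 < Y k \<omega>" using bd[OF k \<omega>(1)] g_def by linarith
        then show "g / 4 < \<bar>Y k \<omega> - F\<bar>" using g by simp
      qed
    qed
    finally show "q \<le> prob {\<omega>\<in>space M. g / 4 < \<bar>Y k \<omega> - F\<bar>}" .
  qed
qed

lemma (in prob_space) upper_f:
  fixes Y Wk :: "nat \<Rightarrow> 'a \<Rightarrow> real"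
  assumes conv: "\<And>e. e > 0 \<Longrightarrow> (\<lambda>k. prob {\<omega>\<in>space M. e < \<bar>Y k \<omega> - F\<bar>}) \<longlonglongrightarrow> 0"
    and mY[measurable]: "\<And>k. Y k \<in> borel_measurable M"
    and bd: "\<And>k \<omega>. k \<ge> 1 \<Longrightarrow> \<omega> \<in> space M \<Longrightarrow> Y k \<omega> \<le> \<alpha> - \<beta> * Wk k \<omega>"
    and \<beta>: "\<beta> \<ge> 0"
    and tail: "\<And>\<delta>. \<delta> > 0 \<Longrightarrow> \<exists>q>0. \<forall>k\<ge>1. q \<le> prob {\<omega>\<in>space M. m - \<delta> < Wk k \<omega>}"
  shows "F \<le> \<alpha> - \<beta> * m"
proof (rule ccontr)
  assume neg: "\<not> F \<le> \<alpha> - \<beta> * m"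
  define g where "g = F - (\<alpha> - \<beta> * m)"
  have g: "g > 0" using neg unfolding g_def by simp
  define \<delta> where "\<delta> = g / (2 * (\<beta> + 1))"
  have \<delta>: "\<delta> > 0" unfolding \<delta>_def using g \<beta> by simp
  have bd\<delta>: "\<beta> * \<delta> \<le> g / 2"
  proof -
    have "\<beta> * \<delta> = g / 2 * (\<beta> / (\<beta> + 1))" unfolding \<delta>_def using \<beta> by (simp add: field_simps)
    also have "\<dots> \<le> g / 2 * 1" using g \<beta> by (intro mult_left_mono) auto
    finally show ?thesis by simp
  qed
  obtain q where q: "q > 0" and ql: "\<And>k. k \<ge> 1 \<Longrightarrow> q \<le> prob {\<omega>\<in>space M. m - \<delta> < Wk k \<omega>}"
    using tail[OF \<delta>] by blast
  show False
  proof (rule conv_contra[OF conv[of "g/4"] q])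
    show "0 < g / 4" using g by simp
    fix k :: nat assume k: "k \<ge> 1"
    have "q \<le> prob {\<omega>\<in>space M. m - \<delta> < Wk k \<omega>}" by (rule ql[OF k])
    also have "\<dots> \<le> prob {\<omega>\<in>space M. g / 4 < \<bar>Y k \<omega> - F\<bar>}"
    proof (rule finite_measure_mono)
      show "{\<omega> \<in> space M. g / 4 < \<bar>Y k \<omega> - F\<bar>} \<in> sets M" by measurable
      show "{\<omega> \<in> space M. m - \<delta> < Wk k \<omega>} \<subseteq> {\<omega> \<in> space M. g / 4 < \<bar>Y k \<omega> - F\<bar>}"
      proof safe
        fix \<omega> assume \<omega>: "\<omega> \<in> space M" "m - \<delta> < Wk k \<omega>"
        have "\<beta> * (m - \<delta>) \<le> \<beta> * Wk k \<omega>" using \<omega> \<beta> by (intro mult_left_mono) auto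
        then have "Y k \<omega> \<le> F - g + \<beta> * \<delta>" using bd[OF k \<omega>(1)] unfolding g_def by (simp add: algebra_simps)
        then have "Y k \<omega> \<le> F - g / 2" using bd\<delta> by simp
        then show "g / 4 < \<bar>Y k \<omega> - F\<bar>" using g by simp
      qed
    qed
    finally show "q \<le> prob {\<omega>\<in>space M. g / 4 < \<bar>Y k \<omega> - F\<bar>}" .
  qed
qed

lemma (in prob_space) prob_lower_from_mean:
  fixes T :: "'a \<Rightarrow> real"
  assumes mT[measurable]: "T \<in> borel_measurable M"
    and nn: "\<And>\<omega>. 0 \<le> T \<omega>" and ub: "\<And>\<omega>. T \<omega> \<le> K"
    and eT: "m - \<eta> \<le> expectation T" and \<eta>: "\<eta> > 0"
  shows "\<eta> / (\<bar>K\<bar> + \<bar>m\<bar> + 2 * \<eta>) \<le> prob {\<omega>\<in>space M. m - 2 * \<eta> < T \<omega>}"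
proof -
  define E where "E = {\<omega>\<in>space M. m - 2 * \<eta> < T \<omega>}"
  have E[measurable]: "E \<in> sets M" unfolding E_def by measurable
  define p where "p = prob E"
  have iT: "integrable M T"
    by (rule integrable_const_bound[where B=K]) (use nn ub in auto)
  have pw: "T \<omega> \<le> K * indicator E \<omega> + (m - 2 * \<eta>) * indicator (space M - E) \<omega>" if "\<omega> \<in> space M" for \<omega>
    using that ub unfolding E_def by (auto split: split_indicator)
  have "expectation T \<le> expectation (\<lambda>\<omega>. K * indicator E \<omega> + (m - 2 * \<eta>) * indicator (space M - E) \<omega>)"
  proof (rule integral_mono[OF iT])
    have "E \<subseteq> space M" unfolding E_def by auto
    show "integrable M (\<lambda>\<omega>. K * indicator E \<omega> + (m - 2 * \<eta>) * indicator (space M - E) \<omega>)"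
      by (intro Bochner_Integration.integrable_add integrable_mult_right integrable_real_indicator)
         (auto simp: emeasure_finite top.not_eq_extremum[symmetric])
  qed (use pw in auto)
  also have "\<dots> = K * p + (m - 2 * \<eta>) * (1 - p)"
  proof -
    have fin: "emeasure M E < \<infinity>" "emeasure M (space M - E) < \<infinity>"
      by (auto simp: emeasure_finite top.not_eq_extremum[symmetric])
    have i1: "integrable M (\<lambda>\<omega>. K * indicator E \<omega>)"
      using fin by (intro integrable_mult_right integrable_real_indicator) auto
    have i2: "integrable M (\<lambda>\<omega>. (m - 2 * \<eta>) * indicator (space M - E) \<omega>)"
      using fin by (intro integrable_mult_right integrable_real_indicator) auto
    have "E \<inter> space M = E" unfolding E_def by auto
    then show ?thesis
      unfolding p_def by (simp add: Bochner_Integration.integral_add[OF i1 i2] prob_compl Int_absorb2)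
  qed
  finally have "m - \<eta> \<le> K * p + (m - 2 * \<eta>) * (1 - p)" using eT by simp
  then have "\<eta> \<le> p * (K - m + 2 * \<eta>)" by (simp add: algebra_simps)
  also have "\<dots> \<le> p * (\<bar>K\<bar> + \<bar>m\<bar> + 2 * \<eta>)" unfolding p_def by (intro mult_left_mono) auto
  finally have A: "\<eta> \<le> p * (\<bar>K\<bar> + \<bar>m\<bar> + 2 * \<eta>)" .
  have pos: "0 < \<bar>K\<bar> + \<bar>m\<bar> + 2 * \<eta>" using \<eta> by simp
  have "\<eta> / (\<bar>K\<bar> + \<bar>m\<bar> + 2 * \<eta>) \<le> p"
    by (simp only: pos_divide_le_eq[OF pos]) (rule A)
  then show ?thesis unfolding p_def E_def .
qed

lemma pos_sum_split:
  fixes u :: "'s \<Rightarrow> real"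
  assumes S: "finite S" "S \<noteq> {}" and x: "x \<le> (\<Sum>s\<in>S. u s)"
  shows "max (x - K) 0 \<le> (\<Sum>s\<in>S. max (u s - K / real (card S)) 0)"
proof -
  have c: "real (card S) > 0" using S by (simp add: card_gt_0_iff)
  have e: "(\<Sum>s\<in>S. (u s - K / real (card S))) = (\<Sum>s\<in>S. u s) - K"
    using c by (simp add: sum_subtractf)
  have l: "(\<Sum>s\<in>S. (u s - K / real (card S))) \<le> (\<Sum>s\<in>S. max (u s - K / real (card S)) 0)"
    by (intro sum_mono) auto
  have "x - K \<le> (\<Sum>s\<in>S. max (u s - K / real (card S)) 0)" using e l x by linarith
  moreover have "0 \<le> (\<Sum>s\<in>S. max (u s - K / real (card S)) 0)" by (intro sum_nonneg) auto
  ultimately show ?thesis by simp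
qed

lemma (in prob_space) tail_tendsto:
  fixes U :: "'a \<Rightarrow> real"
  assumes iU: "integrable M U" and nn: "\<And>\<omega>. 0 \<le> U \<omega>"
  shows "((\<lambda>K. expectation (\<lambda>\<omega>. max (U \<omega> - K) 0)) \<longlongrightarrow> 0) at_top"
proof -
  have mU[measurable]: "U \<in> borel_measurable M" using iU by auto
  have "((\<lambda>K. expectation (\<lambda>\<omega>. max (U \<omega> - K) 0)) \<longlongrightarrow> expectation (\<lambda>\<omega>. 0)) at_top"
  proof (rule integral_dominated_convergence_at_top[where w = U])
    show "(\<lambda>\<omega>. 0::real) \<in> borel_measurable M" by simp
    show "(\<lambda>\<omega>. max (U \<omega> - K) 0) \<in> borel_measurable M" for K by measurable
    show "integrable M U" by (rule iU)
    show "AE \<omega> in M. ((\<lambda>K. max (U \<omega> - K) 0) \<longlongrightarrow> 0) at_top"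
    proof (rule AE_I2)
      fix \<omega>
      have "eventually (\<lambda>K. max (U \<omega> - K) 0 = 0) at_top"
        using eventually_ge_at_top[of "U \<omega>"] by eventually_elim simp
      then show "((\<lambda>K. max (U \<omega> - K) 0) \<longlongrightarrow> 0) at_top" by (rule tendsto_eventually)
    qed
    show "\<forall>\<^sub>F K in at_top. AE \<omega> in M. norm (max (U \<omega> - K) 0) \<le> U \<omega>"
      using eventually_ge_at_top[of "0::real"] by eventually_elim (auto simp: nn)
  qed
  then show ?thesis by simp
qed

lemma (in prob_space) unif_tail:
  fixes W :: "nat \<Rightarrow> 'a \<Rightarrow> real" and U :: "'s::finite \<Rightarrow> nat \<Rightarrow> 'a \<Rightarrow> real" and g :: "'s \<Rightarrow> real \<Rightarrow> real"
  assumes iW: "\<And>i. integrable M (W i)"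
    and dom: "\<And>i \<omega>. \<omega> \<in> space M \<Longrightarrow> W i \<omega> \<le> (\<Sum>s\<in>UNIV. U s i \<omega>)"
    and iU: "\<And>s i. integrable M (U s i)"
    and gdef: "\<And>s i K. expectation (\<lambda>\<omega>. max (U s i \<omega> - K) 0) = g s K"
    and glim: "\<And>s. (g s \<longlongrightarrow> 0) at_top"
    and \<eta>: "\<eta> > 0"
  shows "\<exists>K\<ge>0. \<forall>i. expectation (\<lambda>\<omega>. max (W i \<omega> - K) 0) \<le> \<eta>"
proof -
  define c where "c = real CARD('s)"
  have c: "c > 0" unfolding c_def by simp
  have lim1: "LIM K at_top. K / c :> at_top"
  proof -
    have "LIM K at_top. (1 / c) * K :> at_top"
      by (rule filterlim_tendsto_pos_mult_at_top[OF tendsto_const]) (use c in \<open>auto intro: filterlim_ident\<close>)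
    then show ?thesis by simp
  qed
  have "((\<lambda>K. \<Sum>s\<in>UNIV. g s (K / c)) \<longlongrightarrow> (\<Sum>s\<in>(UNIV::'s set). 0)) at_top"
    by (intro tendsto_sum filterlim_compose[OF glim lim1])
  then have "((\<lambda>K. \<Sum>s\<in>UNIV. g s (K / c)) \<longlongrightarrow> 0) at_top" by simp
  then have "eventually (\<lambda>K. (\<Sum>s\<in>UNIV. g s (K / c)) < \<eta>) at_top"
    by (rule order_tendstoD(2)) (rule \<eta>)
  moreover have "eventually (\<lambda>K. K \<ge> (0::real)) at_top" by (rule eventually_ge_at_top)
  ultimately have "eventually (\<lambda>K. K \<ge> 0 \<and> (\<Sum>s\<in>UNIV. g s (K / c)) < \<eta>) at_top"
    by eventually_elim auto
  then obtain N where N: "\<And>K. K \<ge> N \<Longrightarrow> K \<ge> 0 \<and> (\<Sum>s\<in>UNIV. g s (K / c)) < \<eta>"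
    unfolding eventually_at_top_linorder by blast
  obtain K where K0: "K \<ge> 0" and KG: "(\<Sum>s\<in>UNIV. g s (K / c)) < \<eta>"
    using N[of N] by blast
  have "expectation (\<lambda>\<omega>. max (W i \<omega> - K) 0) \<le> \<eta>" for i
  proof -
    have "expectation (\<lambda>\<omega>. max (W i \<omega> - K) 0) \<le> expectation (\<lambda>\<omega>. \<Sum>s\<in>UNIV. max (U s i \<omega> - K / c) 0)"
    proof (rule integral_mono)
      show "integrable M (\<lambda>\<omega>. max (W i \<omega> - K) 0)" using iW by auto
      show "integrable M (\<lambda>\<omega>. \<Sum>s\<in>UNIV. max (U s i \<omega> - K / c) 0)"
        using iU by (intro Bochner_Integration.integrable_sum) auto
      fix \<omega> assume "\<omega> \<in> space M"
      then show "max (W i \<omega> - K) 0 \<le> (\<Sum>s\<in>UNIV. max (U s i \<omega> - K / c) 0)"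
        using pos_sum_split[of UNIV "W i \<omega>" "\<lambda>s. U s i \<omega>" K] dom unfolding c_def by auto
    qed
    also have "\<dots> = (\<Sum>s\<in>UNIV. g s (K / c))"
    proof -
      have "expectation (\<lambda>\<omega>. \<Sum>s\<in>UNIV. max (U s i \<omega> - K / c) 0) = (\<Sum>s\<in>UNIV. expectation (\<lambda>\<omega>. max (U s i \<omega> - K / c) 0))"
        by (rule Bochner_Integration.integral_sum) (use iU in auto)
      then show ?thesis by (simp add: gdef)
    qed
    finally show ?thesis using KG by simp
  qed
  then show ?thesis using K0 by auto
qed

lemma (in prob_space) avg_tail:
  fixes W :: "nat \<Rightarrow> 'a \<Rightarrow> real"
  assumes iW: "\<And>i. integrable M (W i)" and eW: "\<And>i. expectation (W i) = m"
    and nn: "\<And>i \<omega>. 0 \<le> W i \<omega>"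
    and unif: "\<And>\<eta>. \<eta> > 0 \<Longrightarrow> \<exists>K\<ge>0. \<forall>i. expectation (\<lambda>\<omega>. max (W i \<omega> - K) 0) \<le> \<eta>"
    and \<delta>: "\<delta> > 0"
  shows "\<exists>q>0. \<forall>k\<ge>1. q \<le> prob {\<omega>\<in>space M. m - \<delta> < (\<Sum>i<k. W i \<omega>) / real k}"
proof -
  have mW[measurable]: "W i \<in> borel_measurable M" for i using iW by auto
  obtain K where K0: "K \<ge> 0" and Kb: "\<And>i. expectation (\<lambda>\<omega>. max (W i \<omega> - K) 0) \<le> \<delta> / 2"
    using unif[of "\<delta>/2"] \<delta> by auto
  define q where "q = (\<delta> / 2) / (\<bar>K\<bar> + \<bar>m\<bar> + 2 * (\<delta> / 2))"
  have q: "q > 0" unfolding q_def using \<delta> by (intro divide_pos_pos) auto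
  have main: "q \<le> prob {\<omega>\<in>space M. m - \<delta> < (\<Sum>i<k. W i \<omega>) / real k}" if k: "k \<ge> 1" for k
  proof -
    define T where "T \<omega> = (\<Sum>i<k. min (W i \<omega>) K) / real k" for \<omega>
    have kpos: "real k > 0" using k by simp
    have mT[measurable]: "T \<in> borel_measurable M" unfolding T_def by measurable
    have Tnn: "0 \<le> T \<omega>" for \<omega> unfolding T_def using nn K0 by (intro divide_nonneg_nonneg sum_nonneg) auto
    have Tub: "T \<omega> \<le> K" for \<omega>
    proof -
      have "(\<Sum>i<k. min (W i \<omega>) K) \<le> (\<Sum>i<k. K)" by (intro sum_mono) auto
      then show ?thesis unfolding T_def using kpos by (simp add: divide_le_eq mult.commute)
    qed
    have imin: "integrable M (\<lambda>\<omega>. min (W i \<omega>) K)" for i using iW by auto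
    have emin: "m - \<delta> / 2 \<le> expectation (\<lambda>\<omega>. min (W i \<omega>) K)" for i
    proof -
      have e: "min (W i \<omega>) K = W i \<omega> - max (W i \<omega> - K) 0" for \<omega> by (simp add: min_def max_def)
      have "expectation (\<lambda>\<omega>. min (W i \<omega>) K) = expectation (W i) - expectation (\<lambda>\<omega>. max (W i \<omega> - K) 0)"
        unfolding e using iW by (subst Bochner_Integration.integral_diff) auto
      then show ?thesis using Kb[of i] eW[of i] by simp
    qed
    have "expectation T = (\<Sum>i<k. expectation (\<lambda>\<omega>. min (W i \<omega>) K)) / real k"
      unfolding T_def using imin by (simp add: integral_sum)
    also have "\<dots> \<ge> (\<Sum>i<k. m - \<delta> / 2) / real k"
      using emin kpos by (intro divide_right_mono sum_mono) auto
    finally have eT: "m - \<delta> / 2 \<le> expectation T" using kpos by simp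
    have "q \<le> prob {\<omega>\<in>space M. m - 2 * (\<delta> / 2) < T \<omega>}"
      unfolding q_def by (rule prob_lower_from_mean[OF mT Tnn Tub eT]) (use \<delta> in simp)
    also have "\<dots> \<le> prob {\<omega>\<in>space M. m - \<delta> < (\<Sum>i<k. W i \<omega>) / real k}"
    proof (rule finite_measure_mono)
      show "{\<omega> \<in> space M. m - \<delta> < (\<Sum>i<k. W i \<omega>) / real k} \<in> sets M" by measurable
      have Tle: "T \<omega> \<le> (\<Sum>i<k. W i \<omega>) / real k" for \<omega>
        unfolding T_def using kpos by (intro divide_right_mono sum_mono) auto
      show "{\<omega> \<in> space M. m - 2 * (\<delta> / 2) < T \<omega>} \<subseteq> {\<omega> \<in> space M. m - \<delta> < (\<Sum>i<k. W i \<omega>) / real k}"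
      proof (intro subsetI)
        fix \<omega> assume "\<omega> \<in> {\<omega> \<in> space M. m - 2 * (\<delta> / 2) < T \<omega>}"
        then show "\<omega> \<in> {\<omega> \<in> space M. m - \<delta> < (\<Sum>i<k. W i \<omega>) / real k}"
          using Tle[of \<omega>] by auto
      qed
    qed
    finally show ?thesis .
  qed
  show ?thesis
  proof (intro exI[of _ q] conjI allI impI)
    show "0 < q" by (rule q)
    fix k :: nat assume "1 \<le> k"
    then show "q \<le> prob {\<omega>\<in>space M. m - \<delta> < (\<Sum>i<k. W i \<omega>) / real k}" by (rule main)
  qed
qed

lemma W_dom:
  fixes a :: "'n::finite \<Rightarrow> complex" and v :: complex and d :: "complex ^ 'n"
  shows "(cmod ((\<Sum>j\<in>UNIV. a j * d $ j) + v))\<^sup>2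
     \<le> (2 * (norm d)\<^sup>2 + 2) * ((\<Sum>j\<in>UNIV. (cmod (a j))\<^sup>2) + (Re v)\<^sup>2 + (Im v)\<^sup>2)"
proof -
  define S where "S = (\<Sum>j\<in>UNIV. a j * d $ j)"
  define A2 where "A2 = (\<Sum>j\<in>UNIV. (cmod (a j))\<^sup>2)"
  have nd: "(norm d)\<^sup>2 = (\<Sum>j\<in>UNIV. (cmod (d $ j))\<^sup>2)"
    unfolding norm_vec_def L2_set_def by (simp add: sum_nonneg)
  have A2: "A2 \<ge> 0" unfolding A2_def by (simp add: sum_nonneg)
  have "cmod S \<le> (\<Sum>j\<in>UNIV. cmod (a j) * cmod (d $ j))"
    unfolding S_def by (rule order.trans[OF norm_sum]) (simp add: norm_mult)
  then have "(cmod S)\<^sup>2 \<le> (\<Sum>j\<in>UNIV. cmod (a j) * cmod (d $ j))\<^sup>2"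
    by (intro power_mono) auto
  also have "\<dots> \<le> A2 * (norm d)\<^sup>2" unfolding A2_def nd by (rule Cauchy_Schwarz_ineq_sum)
  finally have S2: "(cmod S)\<^sup>2 \<le> A2 * (norm d)\<^sup>2" .
  have "(cmod (S + v))\<^sup>2 \<le> (cmod S + cmod v)\<^sup>2"
    by (intro power_mono norm_triangle_ineq) auto
  also have "\<dots> \<le> 2 * (cmod S)\<^sup>2 + 2 * (cmod v)\<^sup>2"
    using power2_sum[of "cmod S" "cmod v"] power2_diff[of "cmod S" "cmod v"] zero_le_power2[of "cmod S - cmod v"]
    by linarith
  also have "\<dots> \<le> 2 * (A2 * (norm d)\<^sup>2) + 2 * ((Re v)\<^sup>2 + (Im v)\<^sup>2)"
    using S2 by (simp add: cmod_power2)
  also have "\<dots> \<le> (2 * (norm d)\<^sup>2 + 2) * (A2 + (Re v)\<^sup>2 + (Im v)\<^sup>2)"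
    using A2 by (simp add: algebra_simps)
  finally show ?thesis unfolding S_def A2_def .
qed

lemma lin_aux:
  fixes a1 a2 c0 p1 p2 D :: real
  assumes "\<bar>a1 - (c0 - p1)\<bar> \<le> D + D * p1 + D\<^sup>2" "\<bar>a2 - (c0 - p2)\<bar> \<le> D + D * p2 + D\<^sup>2"
  shows "2 * c0 - (1 + D) * (p1 + p2) - 2 * D - 2 * D\<^sup>2 \<le> a1 + a2"
    and "a1 + a2 \<le> 2 * c0 - (1 - D) * (p1 + p2) + 2 * D + 2 * D\<^sup>2"
  using assms unfolding abs_le_iff ring_distribs by linarith+

lemma term_bounds:
  assumes D: "D > 0"
  shows "2 * (ln D - ln pi / 2) - (1 + D) * ((x1 - t1)\<^sup>2 + (x2 - t2)\<^sup>2) - 2 * D - 2 * D\<^sup>2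
           \<le> llterm D c x1 t1 + llterm D c x2 t2"
    and "llterm D c x1 t1 + llterm D c x2 t2
           \<le> 2 * (ln D - ln pi / 2) - (1 - D) * ((x1 - t1)\<^sup>2 + (x2 - t2)\<^sup>2) + 2 * D + 2 * D\<^sup>2"
proof -
  have q: "D * (2 * \<bar>u\<bar> + D) \<le> D + D * u\<^sup>2 + D\<^sup>2" for u :: real
  proof -
    have "2 * \<bar>u\<bar> \<le> 1 + u\<^sup>2"
      using power2_diff[of "\<bar>u\<bar>" 1] zero_le_power2[of "\<bar>u\<bar> - 1"] by simp
    then have "D * (2 * \<bar>u\<bar>) \<le> D * (1 + u\<^sup>2)" using D by (intro mult_left_mono) auto
    then show ?thesis by (simp add: algebra_simps power2_eq_square)
  qed
  have b1: "\<bar>llterm D c x1 t1 - (ln D - ln pi / 2 - (x1 - t1)\<^sup>2)\<bar> \<le> D + D * (x1 - t1)\<^sup>2 + D\<^sup>2"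
    using llterm_bound[OF D, of c x1 t1] q[of "x1 - t1"] by linarith
  have b2: "\<bar>llterm D c x2 t2 - (ln D - ln pi / 2 - (x2 - t2)\<^sup>2)\<bar> \<le> D + D * (x2 - t2)\<^sup>2 + D\<^sup>2"
    using llterm_bound[OF D, of c x2 t2] q[of "x2 - t2"] by linarith
  have e1: "(1 + D) * ((x1 - t1)\<^sup>2 + (x2 - t2)\<^sup>2) = (x1 - t1)\<^sup>2 + (x2 - t2)\<^sup>2 + D * (x1 - t1)\<^sup>2 + D * (x2 - t2)\<^sup>2"
    by (simp add: algebra_simps)
  have e2: "(1 - D) * ((x1 - t1)\<^sup>2 + (x2 - t2)\<^sup>2) = (x1 - t1)\<^sup>2 + (x2 - t2)\<^sup>2 - D * (x1 - t1)\<^sup>2 - D * (x2 - t2)\<^sup>2"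
    by (simp add: algebra_simps)
  show "2 * (ln D - ln pi / 2) - (1 + D) * ((x1 - t1)\<^sup>2 + (x2 - t2)\<^sup>2) - 2 * D - 2 * D\<^sup>2
           \<le> llterm D c x1 t1 + llterm D c x2 t2"
    by (rule lin_aux(1)[OF b1 b2])
  show "llterm D c x1 t1 + llterm D c x2 t2
           \<le> 2 * (ln D - ln pi / 2) - (1 - D) * ((x1 - t1)\<^sup>2 + (x2 - t2)\<^sup>2) + 2 * D + 2 * D\<^sup>2"
    by (rule lin_aux(2)[OF b1 b2])
qed

lemma (in prob_space) same_distr_integral:
  fixes X Y :: "'a \<Rightarrow> 'b::{banach, second_countable_topology}" and g :: "'b \<Rightarrow> real"
  assumes "distr M borel X = distr M borel Y" "X \<in> borel_measurable M" "Y \<in> borel_measurable M"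
    "g \<in> borel_measurable borel"
  shows "expectation (\<lambda>\<omega>. g (X \<omega>)) = expectation (\<lambda>\<omega>. g (Y \<omega>))"
  using integral_distr[of X M borel g] integral_distr[of Y M borel g] assms by simp

lemma avg_lo:
  fixes S a b T :: real
  assumes k: "k > 0" and h: "real k * a - b * T \<le> S"
  shows "a / 2 - b / 2 * (T / real k) \<le> S / (2 * real k)"
proof -
  have "a / 2 - b / 2 * (T / real k) = (real k * a - b * T) / (2 * real k)" using k by (simp add: field_simps)
  also have "\<dots> \<le> S / (2 * real k)" using h k by (intro divide_right_mono) auto
  finally show ?thesis .
qed

lemma avg_hi:
  fixes S a b T :: real
  assumes k: "k > 0" and h: "S \<le> real k * a - b * T"
  shows "S / (2 * real k) \<le> a / 2 - b / 2 * (T / real k)"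
proof -
  have "S / (2 * real k) \<le> (real k * a - b * T) / (2 * real k)" using h k by (intro divide_right_mono) auto
  also have "\<dots> = a / 2 - b / 2 * (T / real k)" using k by (simp add: field_simps)
  finally show ?thesis .
qed

theorem corollary1:
  fixes M :: "'a measure"
    and A :: "nat \<Rightarrow> 'n::finite \<Rightarrow> 'a \<Rightarrow> complex"
    and v :: "nat \<Rightarrow> 'a \<Rightarrow> complex"
    and h hh :: "complex ^ 'n"
    and off :: "real \<Rightarrow> real"
    and f :: "real \<Rightarrow> real"
  assumes "prob_space M"
    and indep: "prob_space.indep_vars M (\<lambda>_. borel)
                  (case_sum (\<lambda>(i, j). A i j) v) UNIV"
    and ident: "\<And>i j i' j'. distr M borel (A i j) = distr M borel (A i' j')"
    and intRe: "\<And>i j. integrable M (\<lambda>\<omega>. (Re (A i j \<omega>))\<^sup>2)"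
    and intIm: "\<And>i j. integrable M (\<lambda>\<omega>. (Im (A i j \<omega>))\<^sup>2)"
    and meanRe: "\<And>i j. prob_space.expectation M (\<lambda>\<omega>. Re (A i j \<omega>)) = 0"
    and meanIm: "\<And>i j. prob_space.expectation M (\<lambda>\<omega>. Im (A i j \<omega>)) = 0"
    and varRe: "\<And>i j. prob_space.expectation M (\<lambda>\<omega>. (Re (A i j \<omega>))\<^sup>2) = 1"
    and varIm: "\<And>i j. prob_space.expectation M (\<lambda>\<omega>. (Im (A i j \<omega>))\<^sup>2) = 1"
    and noiseRe: "\<And>i. distributed M lborel (\<lambda>\<omega>. Re (v i \<omega>)) (normal_density 0 (sqrt (1/2)))"
    and noiseIm: "\<And>i. distributed M lborel (\<lambda>\<omega>. Im (v i \<omega>)) (normal_density 0 (sqrt (1/2)))"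
    and noiseIndep: "\<And>i. prob_space.indep_var M borel (\<lambda>\<omega>. Re (v i \<omega>)) borel (\<lambda>\<omega>. Im (v i \<omega>))"
    and flim: "\<And>Delta CV. Delta > 0 \<Longrightarrow> (\<forall>k. finite (CV k)) \<Longrightarrow>
                 filterlim (\<lambda>k. card (CV k)) at_top sequentially \<Longrightarrow>
                 conv_in_prob M
                   (\<lambda>k \<omega>. ell Delta (off Delta) (\<lambda>i j. A i j \<omega>) (\<lambda>i. v i \<omega>) h hh (CV k)
                           / (2 * real (card (CV k))))
                   (f Delta)"
  shows "(\<lambda>Delta. f Delta - (- (norm (hh - h))\<^sup>2 - ln (pi * exp 1) / 2 + ln Delta))
           \<in> O[at_right 0](\<lambda>Delta. Delta)"
proof -
  interpret prob_space M by (rule assms(1))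
  define X where "X = case_sum (\<lambda>(i, j). A i j) v"
  have indX: "indep_vars (\<lambda>_. borel) X UNIV" using indep unfolding X_def .
  have rvX: "X s \<in> borel_measurable M" for s using indX unfolding indep_vars_def by auto
  have mA[measurable]: "A i j \<in> borel_measurable M" for i j using rvX[of "Inl (i, j)"] by (simp add: X_def)
  have mv[measurable]: "v i \<in> borel_measurable M" for i using rvX[of "Inr i"] by (simp add: X_def)
  have iAA: "indep_var borel (A i j) borel (A i k)" if "j \<noteq> k" for i j k
    using indep_vars_pair[OF indX, of "Inl (i, j)" "Inl (i, k)"] that by (simp add: X_def)
  have iAv: "indep_var borel (A i j) borel (v i)" for i j
    using indep_vars_pair[OF indX, of "Inl (i, j)" "Inr i"] by (simp add: X_def)
  have iRe: "integrable M (\<lambda>\<omega>. Re (A i j \<omega>))" for i j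
    by (rule square_integrable_imp_integrable[OF _ intRe]) measurable
  have iIm: "integrable M (\<lambda>\<omega>. Im (A i j \<omega>))" for i j
    by (rule square_integrable_imp_integrable[OF _ intIm]) measurable
  have inta: "integrable M (A i j)" for i j by (rule complex_integrable_from_parts[OF mA iRe iIm])
  have ea: "expectation (A i j) = 0" for i j by (rule complex_expectation_zero[OF inta meanRe meanIm])
  have sqa: "integrable M (\<lambda>\<omega>. (cmod (A i j \<omega>))\<^sup>2)" for i j
    unfolding cmod_power2 using intRe intIm by (rule Bochner_Integration.integrable_add)
  have ea2: "expectation (\<lambda>\<omega>. (cmod (A i j \<omega>))\<^sup>2) = 2" for i j
    unfolding cmod_power2 using intRe intIm varRe varIm by (simp add: Bochner_Integration.integral_add)
  define \<sigma> where "\<sigma> = sqrt (1/2::real)"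
  have \<sigma>: "\<sigma> > 0" unfolding \<sigma>_def by simp
  have nRe: "distributed M lborel (\<lambda>\<omega>. Re (v i \<omega>)) (normal_density 0 \<sigma>)" for i
    unfolding \<sigma>_def by (rule noiseRe)
  have nIm: "distributed M lborel (\<lambda>\<omega>. Im (v i \<omega>)) (normal_density 0 \<sigma>)" for i
    unfolding \<sigma>_def by (rule noiseIm)
  have vfacts: "integrable M (\<lambda>\<omega>. Y \<omega>) \<and> integrable M (\<lambda>\<omega>. (Y \<omega>)\<^sup>2) \<and> expectation Y = 0
      \<and> expectation (\<lambda>\<omega>. (Y \<omega>)\<^sup>2) = 1/2"
    if nY: "distributed M lborel Y (normal_density 0 \<sigma>)" for Y
  proof -
    have i1: "integrable M (\<lambda>\<omega>. Y \<omega>)"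
      using distributed_integrable[OF nY, of "\<lambda>x. x"] integrable_normal_moment_nz_1 \<sigma> by auto
    have i2: "integrable M (\<lambda>\<omega>. (Y \<omega>)\<^sup>2)"
      using distributed_integrable[OF nY, of "\<lambda>x. x\<^sup>2"] integrable_normal_moment[where k=2 and \<mu>=0, OF \<sigma>] by simp
    have e1: "expectation Y = 0" by (rule normal_distributed_expectation[OF \<sigma> nY])
    have "variance Y = \<sigma>\<^sup>2" by (rule normal_distributed_variance[OF \<sigma> nY])
    then have e2: "expectation (\<lambda>\<omega>. (Y \<omega>)\<^sup>2) = 1/2" using e1 unfolding \<sigma>_def by simp
    show ?thesis using i1 i2 e1 e2 by simp
  qed
  have ivRe: "integrable M (\<lambda>\<omega>. Re (v i \<omega>))" "integrable M (\<lambda>\<omega>. (Re (v i \<omega>))\<^sup>2)"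
    "expectation (\<lambda>\<omega>. Re (v i \<omega>)) = 0" "expectation (\<lambda>\<omega>. (Re (v i \<omega>))\<^sup>2) = 1/2" for i
    using vfacts[OF nRe[of i]] by auto
  have ivIm: "integrable M (\<lambda>\<omega>. Im (v i \<omega>))" "integrable M (\<lambda>\<omega>. (Im (v i \<omega>))\<^sup>2)"
    "expectation (\<lambda>\<omega>. Im (v i \<omega>)) = 0" "expectation (\<lambda>\<omega>. (Im (v i \<omega>))\<^sup>2) = 1/2" for i
    using vfacts[OF nIm[of i]] by auto
  have intv: "integrable M (v i)" for i by (rule complex_integrable_from_parts[OF mv ivRe(1) ivIm(1)])
  have ev: "expectation (v i) = 0" for i by (rule complex_expectation_zero[OF intv ivRe(3) ivIm(3)])
  have sqv: "integrable M (\<lambda>\<omega>. (cmod (v i \<omega>))\<^sup>2)" for i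
    unfolding cmod_power2 using ivRe(2) ivIm(2) by (rule Bochner_Integration.integrable_add)
  have ev2: "expectation (\<lambda>\<omega>. (cmod (v i \<omega>))\<^sup>2) = 1" for i
    unfolding cmod_power2 using ivRe(4)[of i] ivIm(4)[of i]
    by (simp add: Bochner_Integration.integral_add[OF ivRe(2) ivIm(2)])
  define d where "d = h - hh"
  define W where "W i \<omega> = (cmod ((\<Sum>j\<in>UNIV. A i j \<omega> * d $ j) + v i \<omega>))\<^sup>2" for i \<omega>
  define m where "m = 2 * (norm d)\<^sup>2 + 1"
  have iW: "integrable M (W i)" and eW: "expectation (W i) = m" for i
    using EW_row[of "\<lambda>j. A i j" "v i" d, OF mA mv iAA iAv inta intv ea ev sqa sqv ea2 ev2]
    unfolding W_def m_def by auto
  have mW[measurable]: "W i \<in> borel_measurable M" for i using iW by auto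
  have Wnn: "0 \<le> W i \<omega>" for i \<omega> unfolding W_def by simp
  have diffs: "Re (rowmul (\<lambda>i j. A i j \<omega>) i h + v i \<omega>) - Re (rowmul (\<lambda>i j. A i j \<omega>) i hh) = Re ((\<Sum>j\<in>UNIV. A i j \<omega> * d $ j) + v i \<omega>)
     \<and> Im (rowmul (\<lambda>i j. A i j \<omega>) i h + v i \<omega>) - Im (rowmul (\<lambda>i j. A i j \<omega>) i hh) = Im ((\<Sum>j\<in>UNIV. A i j \<omega> * d $ j) + v i \<omega>)"
    for i \<omega>
  proof -
    have "rowmul (\<lambda>i j. A i j \<omega>) i h - rowmul (\<lambda>i j. A i j \<omega>) i hh = (\<Sum>j\<in>UNIV. A i j \<omega> * d $ j)"
      unfolding rowmul_def d_def by (simp add: sum_subtractf[symmetric] right_diff_distrib)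
    then have "rowmul (\<lambda>i j. A i j \<omega>) i h + v i \<omega> - rowmul (\<lambda>i j. A i j \<omega>) i hh = (\<Sum>j\<in>UNIV. A i j \<omega> * d $ j) + v i \<omega>"
      by (simp add: algebra_simps)
    then show ?thesis by (metis minus_complex.sel)
  qed
  have sqsum: "(Re z)\<^sup>2 + (Im z)\<^sup>2 = (cmod z)\<^sup>2" for z :: complex by (simp add: cmod_power2)
  define C where "C = 2 * (norm d)\<^sup>2 + 2"
  have C: "C \<ge> 0" unfolding C_def by simp
  define U where "U s i \<omega> = (case s of Inl j \<Rightarrow> C * (cmod (A i j \<omega>))\<^sup>2
      | Inr b \<Rightarrow> C * (if b then (Re (v i \<omega>))\<^sup>2 else (Im (v i \<omega>))\<^sup>2))" for s :: "'n + bool" and i \<omega>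
  define g where "g s K = (case s of Inl j \<Rightarrow> expectation (\<lambda>\<omega>. max (C * (cmod (A 0 j \<omega>))\<^sup>2 - K) 0)
      | Inr b \<Rightarrow> expectation (\<lambda>\<omega>. max (C * (if b then (Re (v 0 \<omega>))\<^sup>2 else (Im (v 0 \<omega>))\<^sup>2) - K) 0))"
    for s :: "'n + bool" and K
  have dom: "W i \<omega> \<le> (\<Sum>s\<in>UNIV. U s i \<omega>)" for i \<omega>
  proof -
    have "(\<Sum>s\<in>UNIV. U s i \<omega>) = (\<Sum>j\<in>UNIV. U (Inl j) i \<omega>) + (\<Sum>b\<in>UNIV. U (Inr b) i \<omega>)"
      using sum.Plus[of "UNIV::'n set" "UNIV::bool set" "\<lambda>s. U s i \<omega>"] by (simp add: comp_def)
    also have "\<dots> = C * ((\<Sum>j\<in>UNIV. (cmod (A i j \<omega>))\<^sup>2) + (Re (v i \<omega>))\<^sup>2 + (Im (v i \<omega>))\<^sup>2)"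
      by (simp add: U_def UNIV_bool sum_distrib_left algebra_simps)
    finally show ?thesis unfolding W_def C_def using W_dom[of "\<lambda>j. A i j \<omega>" d "v i \<omega>"] by simp
  qed
  have iU: "integrable M (U s i)" for s i
  proof (cases s)
    case (Inl j)
    then show ?thesis unfolding U_def using sqa[of i j] by simp
  next
    case (Inr b)
    then show ?thesis unfolding U_def using ivRe(2)[of i] ivIm(2)[of i] by (cases b) simp_all
  qed
  have cm1: "(\<lambda>z::complex. max (C * (cmod z)\<^sup>2 - K) 0) \<in> borel_measurable borel" for K
    by (rule borel_measurable_continuous_onI) (intro continuous_intros)
  have cm2: "(\<lambda>x::real. max (C * x\<^sup>2 - K) 0) \<in> borel_measurable borel" for K
    by (rule borel_measurable_continuous_onI) (intro continuous_intros)
  have cm2': "(\<lambda>x::real. max (C * x\<^sup>2 - K) 0) \<in> borel_measurable lborel" for K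
    using cm2[of K] by simp
  have gdef: "expectation (\<lambda>\<omega>. max (U s i \<omega> - K) 0) = g s K" for s i K
  proof (cases s)
    case (Inl j)
    have "expectation (\<lambda>\<omega>. max (C * (cmod (A i j \<omega>))\<^sup>2 - K) 0) = expectation (\<lambda>\<omega>. max (C * (cmod (A 0 j \<omega>))\<^sup>2 - K) 0)"
      by (rule same_distr_integral[OF ident[of i j 0 j] mA mA cm1])
    then show ?thesis using Inl unfolding U_def g_def by simp
  next
    case (Inr b)
    show ?thesis
    proof (cases b)
      case True
      have "expectation (\<lambda>\<omega>. max (C * (Re (v i \<omega>))\<^sup>2 - K) 0) = expectation (\<lambda>\<omega>. max (C * (Re (v 0 \<omega>))\<^sup>2 - K) 0)"
        using distributed_integral[OF nRe[of i] cm2'] distributed_integral[OF nRe[of 0] cm2'] by simp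
      then show ?thesis using Inr True unfolding U_def g_def by simp
    next
      case False
      have "expectation (\<lambda>\<omega>. max (C * (Im (v i \<omega>))\<^sup>2 - K) 0) = expectation (\<lambda>\<omega>. max (C * (Im (v 0 \<omega>))\<^sup>2 - K) 0)"
        using distributed_integral[OF nIm[of i] cm2'] distributed_integral[OF nIm[of 0] cm2'] by simp
      then show ?thesis using Inr False unfolding U_def g_def by simp
    qed
  qed
  have glim: "(g s \<longlongrightarrow> 0) at_top" for s
  proof (cases s)
    case (Inl j)
    have "((\<lambda>K. expectation (\<lambda>\<omega>. max (C * (cmod (A 0 j \<omega>))\<^sup>2 - K) 0)) \<longlongrightarrow> 0) at_top"
      by (rule tail_tendsto) (use sqa C in auto)
    then show ?thesis using Inl unfolding g_def by simp
  next
    case (Inr b)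
    have "((\<lambda>K. expectation (\<lambda>\<omega>. max (C * (if b then (Re (v 0 \<omega>))\<^sup>2 else (Im (v 0 \<omega>))\<^sup>2) - K) 0)) \<longlongrightarrow> 0) at_top"
      by (rule tail_tendsto) (use ivRe(2) ivIm(2) C in \<open>cases b, auto\<close>)
    then show ?thesis using Inr unfolding g_def by simp
  qed
  have unif: "\<exists>K\<ge>0. \<forall>i. expectation (\<lambda>\<omega>. max (W i \<omega> - K) 0) \<le> \<eta>" if "\<eta> > 0" for \<eta>
    by (rule unif_tail[OF iW _ iU gdef glim that]) (rule dom)
  have m0: "m \<ge> 0" unfolding m_def by simp
  have key: "ln D - ln pi / 2 - D - D\<^sup>2 - (1 + D) / 2 * m \<le> f D \<and> f D \<le> ln D - ln pi / 2 + D + D\<^sup>2 - (1 - D) / 2 * m"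
    if D: "0 < D" "D < 1" for D
  proof -
    define L where "L = ln D - ln pi / 2"
    define Y where "Y k \<omega> = ell D (off D) (\<lambda>i j. A i j \<omega>) (\<lambda>i. v i \<omega>) h hh {..<k} / (2 * real (card {..<k}))" for k \<omega>
    have cip: "conv_in_prob M Y (f D)"
      unfolding Y_def by (rule flim[OF D(1)]) (simp_all add: filterlim_ident)
    have mY[measurable]: "Y k \<in> borel_measurable M" for k using cip unfolding conv_in_prob_def by auto
    have conv: "(\<lambda>k. prob {\<omega> \<in> space M. e < \<bar>Y k \<omega> - f D\<bar>}) \<longlonglongrightarrow> 0" if "e > 0" for e
      using cip that unfolding conv_in_prob_def by auto
    define Wk where "Wk k \<omega> = (\<Sum>i<k. W i \<omega>) / real k" for k \<omega>
    define T where "T i \<omega> = llterm D (off D) (Re (rowmul (\<lambda>i j. A i j \<omega>) i h + v i \<omega>)) (Re (rowmul (\<lambda>i j. A i j \<omega>) i hh))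
          + llterm D (off D) (Im (rowmul (\<lambda>i j. A i j \<omega>) i h + v i \<omega>)) (Im (rowmul (\<lambda>i j. A i j \<omega>) i hh))" for i \<omega>
    have Yeq: "Y k \<omega> = (\<Sum>i<k. T i \<omega>) / (2 * real k)" for k \<omega> unfolding Y_def T_def ell_def by simp
    have Wsq: "(Re (rowmul (\<lambda>i j. A i j \<omega>) i h + v i \<omega>) - Re (rowmul (\<lambda>i j. A i j \<omega>) i hh))\<^sup>2
        + (Im (rowmul (\<lambda>i j. A i j \<omega>) i h + v i \<omega>) - Im (rowmul (\<lambda>i j. A i j \<omega>) i hh))\<^sup>2 = W i \<omega>" for i \<omega>
    proof -
      note e = diffs[of \<omega> i]
      show ?thesis unfolding W_def sqsum[symmetric] by (simp only: conjunct1[OF e] conjunct2[OF e])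
    qed
    have Tlo: "(2 * L - 2 * D - 2 * D\<^sup>2) - (1 + D) * W i \<omega> \<le> T i \<omega>" for i \<omega>
    proof -
      have "2 * L - (1 + D) * W i \<omega> - 2 * D - 2 * D\<^sup>2 \<le> T i \<omega>"
        unfolding T_def L_def by (subst Wsq[symmetric]) (rule term_bounds(1)[OF D(1)])
      then show ?thesis by simp
    qed
    have Thi: "T i \<omega> \<le> (2 * L + 2 * D + 2 * D\<^sup>2) - (1 - D) * W i \<omega>" for i \<omega>
    proof -
      have "T i \<omega> \<le> 2 * L - (1 - D) * W i \<omega> + 2 * D + 2 * D\<^sup>2"
        unfolding T_def L_def by (subst Wsq[symmetric]) (rule term_bounds(2)[OF D(1)])
      then show ?thesis by simp
    qed
    have low: "(L - D - D\<^sup>2) - (1 + D) / 2 * Wk k \<omega> \<le> Y k \<omega>" if k: "k \<ge> 1" for k \<omega>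
    proof -
      have "(\<Sum>i<k. (2 * L - 2 * D - 2 * D\<^sup>2) - (1 + D) * W i \<omega>) \<le> (\<Sum>i<k. T i \<omega>)"
        by (intro sum_mono Tlo)
      moreover have "(\<Sum>i<k. (2 * L - 2 * D - 2 * D\<^sup>2) - (1 + D) * W i \<omega>) = real k * (2 * L - 2 * D - 2 * D\<^sup>2) - (1 + D) * (\<Sum>i<k. W i \<omega>)"
        by (simp add: sum_subtractf sum_distrib_left)
      ultimately have "real k * (2 * L - 2 * D - 2 * D\<^sup>2) - (1 + D) * (\<Sum>i<k. W i \<omega>) \<le> (\<Sum>i<k. T i \<omega>)" by simp
      from avg_lo[OF _ this] k have X: "(2 * L - 2 * D - 2 * D\<^sup>2) / 2 - (1 + D) / 2 * ((\<Sum>i<k. W i \<omega>) / real k) \<le> (\<Sum>i<k. T i \<omega>) / (2 * real k)"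
        by simp
      have h2: "(2 * L - 2 * D - 2 * D\<^sup>2) / 2 = L - D - D\<^sup>2" by simp
      show ?thesis unfolding Yeq Wk_def using X[unfolded h2] .
    qed
    have high: "Y k \<omega> \<le> (L + D + D\<^sup>2) - (1 - D) / 2 * Wk k \<omega>" if k: "k \<ge> 1" for k \<omega>
    proof -
      have "(\<Sum>i<k. T i \<omega>) \<le> (\<Sum>i<k. (2 * L + 2 * D + 2 * D\<^sup>2) - (1 - D) * W i \<omega>)"
        by (intro sum_mono Thi)
      moreover have "(\<Sum>i<k. (2 * L + 2 * D + 2 * D\<^sup>2) - (1 - D) * W i \<omega>) = real k * (2 * L + 2 * D + 2 * D\<^sup>2) - (1 - D) * (\<Sum>i<k. W i \<omega>)"
        by (simp add: sum_subtractf sum_distrib_left)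
      ultimately have "(\<Sum>i<k. T i \<omega>) \<le> real k * (2 * L + 2 * D + 2 * D\<^sup>2) - (1 - D) * (\<Sum>i<k. W i \<omega>)" by simp
      from avg_hi[OF _ this] k have X: "(\<Sum>i<k. T i \<omega>) / (2 * real k) \<le> (2 * L + 2 * D + 2 * D\<^sup>2) / 2 - (1 - D) / 2 * ((\<Sum>i<k. W i \<omega>) / real k)"
        by simp
      have h2: "(2 * L + 2 * D + 2 * D\<^sup>2) / 2 = L + D + D\<^sup>2" by simp
      show ?thesis unfolding Yeq Wk_def using X[unfolded h2] .
    qed
    have mWk[measurable]: "Wk k \<in> borel_measurable M" for k unfolding Wk_def by measurable
    have iWk: "integrable M (Wk k)" if "k \<ge> 1" for k unfolding Wk_def using iW by auto
    have eWk: "expectation (Wk k) = m" if "k \<ge> 1" for k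
      unfolding Wk_def using iW eW that by (simp add: integral_sum)
    have nnWk: "0 \<le> Wk k \<omega>" for k \<omega> unfolding Wk_def using Wnn by (simp add: sum_nonneg)
    have lo: "(L - D - D\<^sup>2) - (1 + D) / 2 * m \<le> f D"
      by (rule lower_f[OF conv mY mWk iWk eWk nnWk low]) (use D in simp_all)
    have tail: "\<exists>q>0. \<forall>k\<ge>1. q \<le> prob {\<omega>\<in>space M. m - \<delta> < Wk k \<omega>}" if "\<delta> > 0" for \<delta>
      unfolding Wk_def by (rule avg_tail[OF iW eW Wnn unif that])
    have hi: "f D \<le> (L + D + D\<^sup>2) - (1 - D) / 2 * m"
      by (rule upper_f[OF conv mY high _ tail]) (use D in simp_all)
    show ?thesis using lo hi unfolding L_def by simp
  qed
  have ev: "eventually (\<lambda>D. D \<in> {0<..<1}) (at_right (0::real))"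
    by (rule eventually_at_right_real) simp
  show ?thesis
  proof (rule bigoI[where c = "2 + m / 2"])
    show "eventually (\<lambda>D. norm (f D - (- (norm (hh - h))\<^sup>2 - ln (pi * exp 1) / 2 + ln D)) \<le> (2 + m / 2) * norm D) (at_right 0)"
      using ev
    proof eventually_elim
      case (elim D)
      then have D: "0 < D" "D < 1" by auto
      have nh: "norm (hh - h) = norm d" unfolding d_def by (rule norm_minus_commute)
      have lnpe: "ln (pi * exp 1) = ln pi + 1" by (simp add: ln_mult)
      define c where "c = ln D - ln pi / 2 - m / 2"
      have ceq: "- (norm (hh - h))\<^sup>2 - ln (pi * exp 1) / 2 + ln D = c"
        unfolding c_def m_def nh lnpe by (simp add: field_simps)
      have DD: "D\<^sup>2 \<le> D" using D by (simp add: power2_eq_square mult_left_le_one_le)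
      have Dm: "0 \<le> D * m" using D m0 by simp
      have k1: "c - D - D\<^sup>2 - D * m / 2 \<le> f D" and k2: "f D \<le> c + D + D\<^sup>2 + D * m / 2"
      proof -
        have e1: "(1 + D) / 2 * m = m / 2 + D * m / 2" and e2: "(1 - D) / 2 * m = m / 2 - D * m / 2"
          by (simp_all add: field_simps)
        show "c - D - D\<^sup>2 - D * m / 2 \<le> f D" using conjunct1[OF key[OF D]] unfolding e1 c_def by linarith
        show "f D \<le> c + D + D\<^sup>2 + D * m / 2" using conjunct2[OF key[OF D]] unfolding e2 c_def by linarith
      qed
      have e3: "(2 + m / 2) * \<bar>D\<bar> = 2 * D + D * m / 2" using D by (simp add: field_simps)
      have "\<bar>f D - c\<bar> \<le> 2 * D + D * m / 2" unfolding abs_le_iff using k1 k2 DD Dm by linarith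
      then show ?case unfolding ceq real_norm_def e3 .
    qed
  qed
qed

end
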